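(* Let $f=(A,B,C)$ be a partially reduced imaginary or unusual binary quadratic form over $\mathbb{F}_q[t]$ and suppose $f=f\circ M$ for some $M\in GL_2(\mathbb{F}_q[t])$. If $|A|<|C|$, then $M=\pm I$, or $M=\pm J$ with $J=\begin{pmatrix}1&0\\0&-1\end{pmatrix}$, the latter only if $B=0$. If $|A|=|C|$, then $M=\begin{pmatrix}\alpha&\beta\\ -u\lambda\beta& u\alpha\end{pmatrix}$ with $\alpha,\beta\in\mathbb{F}_q$, $\lambda=-4/h$ and $u=\det M=\pm1$. Moreover, if $\beta\ne0$ then $B\neq0$ and $\alpha=u\beta(C\lambda-A)/B\in\mathbb{F}_q$. Consequently such automorphisms with $\beta\neq 0$ exist if and only if $((C\lambda-A)/B)^2+\lambda$ is a square in $\mathbb{F}_q^*$ (with $(C\lambda-A)/B\in\mathbb{F}_q$), in which case there are exactly two of them.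
   Context: $\mathbb{F}_q$ is a finite field with $\gcd(q,6)=1$; $|H|=q^{\deg H}$ for nonzero $H\in\mathbb{F}_q[t]$, $|0|=0$, $\mathrm{sgn}(H)$ = leading coefficient. A binary quadratic form $f=(A,B,C)$ is $Ax^2+Bxy+Cy^2$ over $\mathbb{F}_q[t]$ with discriminant $D=B^2-4AC$; $(f\circ M)(x,y)=f(\alpha x+\beta y,\gamma x+\delta y)$; $GL_2(\mathbb{F}_q[t])$ = matrices over $\mathbb{F}_q[t]$ with determinant in $\mathbb{F}_q^*$. $D$ is imaginary if $\deg D$ odd, unusual if $\deg D$ even and $\mathrm{sgn}(D)$ a non-square in $\mathbb{F}_q^*$. Fix a primitive root $h$ of $\mathbb{F}_q^*$, $S=\{h^i:0\le i\le (q-3)/2\}$. Standing assumptions: forms are primitive, irreducible, $D\notin\mathbb{F}_q$, $\mathrm{sgn}(D)\in\{1,h\}$. A form $(A,B,C)$ is partially reduced if $|B|<|A|\le|C|$; if $|A|<|C|$ then $\mathrm{sgn}(A)\in\{1,h\}$, if $|A|=|C|$ then $\mathrm{sgn}(A)=1$; and $B\ne0$ implies $\mathrm{sgn}(B)\in S$. *)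

theory Defs
  imports "HOL-Computational_Algebra.Computational_Algebra"
begin

text \<open>Binary quadratic forms (A,B,C) over F_q[t] and 2x2 matrices (alpha,beta,gamma,delta)
  = [[alpha,beta],[gamma,delta]] over F_q[t].\<close>

type_synonym 'a bqf = "'a poly \<times> 'a poly \<times> 'a poly"
type_synonym 'a mat2 = "'a poly \<times> 'a poly \<times> 'a poly \<times> 'a poly"

definition pabs :: "'a::{field,finite} poly \<Rightarrow> nat" where
  "pabs H = (if H = 0 then 0 else card (UNIV :: 'a set) ^ degree H)"

definition disc :: "'a::field bqf \<Rightarrow> 'a poly" where
  "disc f = (case f of (A, B, C) \<Rightarrow> B^2 - 4 * A * C)"

definition mdet :: "'a::field mat2 \<Rightarrow> 'a poly" where
  "mdet M = (case M of (a, b, c, d) \<Rightarrow> a * d - b * c)"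

definition inGL2 :: "'a::field mat2 \<Rightarrow> bool" where
  "inGL2 M \<longleftrightarrow> mdet M \<noteq> 0 \<and> degree (mdet M) = 0"

text \<open>(f o M)(x,y) = f(alpha x + beta y, gamma x + delta y), written via its coefficients.\<close>
definition form_comp :: "'a::field bqf \<Rightarrow> 'a mat2 \<Rightarrow> 'a bqf" where
  "form_comp f M = (case f of (A, B, C) \<Rightarrow> case M of (a, b, c, d) \<Rightarrow>
     (A * a^2 + B * a * c + C * c^2,
      2 * A * a * b + B * (a * d + b * c) + 2 * C * c * d,
      A * b^2 + B * b * d + C * d^2))"

definition primitive_root :: "'a::field \<Rightarrow> bool" where
  "primitive_root h \<longleftrightarrow> (\<forall>x. x \<noteq> 0 \<longrightarrow> (\<exists>i::nat. x = h ^ i))"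

definition Sset :: "'a::{field,finite} \<Rightarrow> 'a set" where
  "Sset h = {h ^ i | i. i \<le> (card (UNIV :: 'a set) - 3) div 2}"

definition imaginary :: "'a::field poly \<Rightarrow> bool" where
  "imaginary D \<longleftrightarrow> odd (degree D)"

definition unusual :: "'a::field poly \<Rightarrow> bool" where
  "unusual D \<longleftrightarrow> even (degree D) \<and> \<not> (\<exists>s. s \<noteq> 0 \<and> lead_coeff D = s^2)"

definition primitive_form :: "'a::field_gcd bqf \<Rightarrow> bool" where
  "primitive_form f = (case f of (A, B, C) \<Rightarrow> gcd A (gcd B C) = 1)"

definition irreducible_form :: "'a::field bqf \<Rightarrow> bool" where
  "irreducible_form f \<longleftrightarrow> \<not> (\<exists>P. disc f = P^2)"

definition standing :: "'a::field_gcd \<Rightarrow> 'a bqf \<Rightarrow> bool" where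
  "standing h f \<longleftrightarrow> primitive_form f \<and> irreducible_form f \<and> degree (disc f) \<ge> 1
     \<and> lead_coeff (disc f) \<in> {1, h}"

definition partially_reduced :: "'a::{field,finite} \<Rightarrow> 'a bqf \<Rightarrow> bool" where
  "partially_reduced h f = (case f of (A, B, C) \<Rightarrow>
     pabs B < pabs A \<and> pabs A \<le> pabs C
     \<and> (pabs A < pabs C \<longrightarrow> lead_coeff A \<in> {1, h})
     \<and> (pabs A = pabs C \<longrightarrow> lead_coeff A = 1)
     \<and> (B \<noteq> 0 \<longrightarrow> lead_coeff B \<in> Sset h))"

end

theory Submission imports Defs begin

lemma even_card_closed:
  fixes S :: "'a::field set"
  assumes two: "(2::'a) = 0"
  shows "finite S \<Longrightarrow> (\<forall>x\<in>S. x + 1 \<in> S) \<Longrightarrow> even (card S)"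
proof (induction "card S" arbitrary: S rule: less_induct)
  case less
  show ?case
  proof (cases "S = {}")
    case True then show ?thesis by simp
  next
    case False
    then obtain x where x: "x \<in> S" by blast
    have x1: "x + 1 \<in> S" using less.prems x by blast
    have ne: "x + 1 \<noteq> x" by simp
    have m1: "\<And>y::'a. y + 1 + 1 = y" using two by (metis add.assoc one_add_one add.right_neutral)
    define T where "T = S - {x, x + 1}"
    have fT: "finite T" using less.prems unfolding T_def by simp
    have sub: "{x, x + 1} \<subseteq> S" using x x1 by blast
    have c2: "card {x, x + 1} = 2" using ne by simp
    have "card T = card S - card {x, x + 1}" unfolding T_def
      using sub by (simp add: card_Diff_subset)
    moreover have "card {x, x + 1} \<le> card S" using sub less.prems(1) by (rule card_mono[rotated])
    ultimately have cT: "card T + 2 = card S" using c2 by simp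
    have clT: "\<forall>y\<in>T. y + 1 \<in> T"
    proof
      fix y assume y: "y \<in> T"
      hence "y + 1 \<in> S" using less.prems unfolding T_def by blast
      moreover have "y + 1 \<noteq> x" using y m1 unfolding T_def by (metis DiffD2 insertCI)
      moreover have "y + 1 \<noteq> x + 1" using y unfolding T_def by auto
      ultimately show "y + 1 \<in> T" unfolding T_def by auto
    qed
    have "even (card T)" using less.hyps[of T] fT clT cT by simp
    thus ?thesis using cT by presburger
  qed
qed

lemma two_ne_fin:
  assumes "coprime (card (UNIV :: 'a::{field,finite} set)) (6::nat)"
  shows "(2::'a) \<noteq> 0"
proof
  assume h2: "(2::'a) = 0"
  have "even (card (UNIV :: 'a set))" using even_card_closed[OF h2, of UNIV] by simp
  hence "2 dvd card (UNIV :: 'a set)" by simp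
  moreover have "(2::nat) dvd 6" by simp
  ultimately have "is_unit (2::nat)" using assms coprime_common_divisor by blast
  thus False by simp
qed

lemma qf_deg_core:
  fixes A B C x y :: "'a::field poly"
  assumes A: "A \<noteq> 0" and C: "C \<noteq> 0" and Bd: "B = 0 \<or> degree B < degree A" and AC: "degree A \<le> degree C"
    and nc: "even (degree A + degree C) \<Longrightarrow> \<not> (\<exists>s. s \<noteq> 0 \<and> - (lead_coeff A * lead_coeff C) = s^2)"
    and x: "x \<noteq> 0" and y: "y \<noteq> 0"
  shows "A*x^2 + B*x*y + C*y^2 \<noteq> 0 \<and> degree (A*x^2 + B*x*y + C*y^2) = max (degree A + 2*degree x) (degree C + 2*degree y)"
proof -
  define P where "P = A*x^2"
  define R where "R = C*y^2"
  define Q where "Q = B*x*y"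
  have dP: "degree P = degree A + 2*degree x" unfolding P_def using A x
    by (simp add: degree_mult_eq degree_power_eq)
  have dR: "degree R = degree C + 2*degree y" unfolding R_def using C y
    by (simp add: degree_mult_eq degree_power_eq)
  have lP: "lead_coeff P = lead_coeff A * lead_coeff x ^ 2" unfolding P_def by (simp add: lead_coeff_mult lead_coeff_power)
  have lR: "lead_coeff R = lead_coeff C * lead_coeff y ^ 2" unfolding R_def by (simp add: lead_coeff_mult lead_coeff_power)
  have PR: "P + R \<noteq> 0 \<and> degree (P + R) = max (degree P) (degree R)"
  proof (cases "degree P = degree R")
    case True
    have lx: "lead_coeff x \<noteq> 0" "lead_coeff y \<noteq> 0" "lead_coeff C \<noteq> 0" using x y C by auto
    have "coeff (P + R) (degree P) \<noteq> 0"
    proof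
      assume "coeff (P + R) (degree P) = 0"
      hence e: "lead_coeff A * lead_coeff x ^ 2 + lead_coeff C * lead_coeff y ^ 2 = 0"
        using True lP lR by simp
      have ev: "even (degree A + degree C)" using True dP dR by presburger
      define w where "w = lead_coeff C * lead_coeff y / lead_coeff x"
      have wx: "w * lead_coeff x = lead_coeff C * lead_coeff y" using lx unfolding w_def by simp
      have "(- (lead_coeff A * lead_coeff C) - w^2) * lead_coeff x ^ 2 = 0"
        using e wx by algebra
      hence "- (lead_coeff A * lead_coeff C) = w^2" using lx by simp
      hence "- (lead_coeff A * lead_coeff C) = (lead_coeff C * lead_coeff y / lead_coeff x)^2"
        unfolding w_def .
      moreover have "lead_coeff C * lead_coeff y / lead_coeff x \<noteq> 0" using lx by simp
      ultimately show False using nc ev by blast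
    qed
    moreover have "degree (P + R) \<le> degree P" using True by (simp add: degree_add_le)
    ultimately have "degree (P + R) = degree P" using le_degree le_antisym by blast
    moreover have "P + R \<noteq> 0"
    proof
      assume "P + R = 0"
      with \<open>coeff (P + R) (degree P) \<noteq> 0\<close> show False by simp
    qed
    ultimately show ?thesis using True by simp
  next
    case False
    show ?thesis
    proof (cases "degree P < degree R")
      case True
      hence "degree (P + R) = degree R" by (rule degree_add_eq_right)
      moreover have "P + R \<noteq> 0" using True R_def C y
        by (metis add.inverse_unique degree_minus less_irrefl)
      ultimately show ?thesis using True by simp
    next
      case F2: False
      hence "degree R < degree P" using False by simp
      hence "degree (P + R) = degree P" by (rule degree_add_eq_left)
      moreover have "P + R \<noteq> 0" using \<open>degree R < degree P\<close>
        by (metis add.inverse_unique degree_minus less_irrefl)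
      ultimately show ?thesis using F2 by simp
    qed
  qed
  have dQ: "Q = 0 \<or> degree Q < degree (P + R)"
  proof (cases "B = 0")
    case True then show ?thesis unfolding Q_def by simp
  next
    case False
    hence "degree B < degree A" using Bd by simp
    have "degree Q = degree B + degree x + degree y" unfolding Q_def using False x y
      by (simp add: degree_mult_eq)
    hence "degree Q < degree (P + R)" using PR dP dR \<open>degree B < degree A\<close> AC by simp
    thus ?thesis by simp
  qed
  have eqf: "A*x^2 + B*x*y + C*y^2 = (P + R) + Q" unfolding P_def Q_def R_def by simp
  have "(P + R) + Q \<noteq> 0 \<and> degree ((P + R) + Q) = degree (P + R)"
  proof (cases "Q = 0")
    case True then show ?thesis using PR by simp
  next
    case False
    hence lt: "degree Q < degree (P + R)" using dQ by simp
    hence "degree ((P + R) + Q) = degree (P + R)" by (rule degree_add_eq_left)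
    moreover have "(P + R) + Q \<noteq> 0" using lt
      by (metis add.inverse_unique degree_minus less_irrefl)
    ultimately show ?thesis by simp
  qed
  thus ?thesis using eqf PR dP dR by simp
qed

lemma qf_deg_x:
  fixes A B C x y :: "'a::field poly"
  assumes A: "A \<noteq> 0" and C: "C \<noteq> 0" and Bd: "B = 0 \<or> degree B < degree A" and AC: "degree A \<le> degree C"
    and nc: "even (degree A + degree C) \<Longrightarrow> \<not> (\<exists>s. s \<noteq> 0 \<and> - (lead_coeff A * lead_coeff C) = s^2)"
    and x: "x \<noteq> 0"
  shows "A*x^2 + B*x*y + C*y^2 \<noteq> 0 \<and> degree A + 2*degree x \<le> degree (A*x^2 + B*x*y + C*y^2)"
proof (cases "y = 0")
  case True
  then show ?thesis using A x by (simp add: degree_mult_eq degree_power_eq)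
next
  case False
  then show ?thesis using qf_deg_core[OF A C Bd AC nc x False] by simp
qed

lemma qf_deg_y:
  fixes A B C x y :: "'a::field poly"
  assumes A: "A \<noteq> 0" and C: "C \<noteq> 0" and Bd: "B = 0 \<or> degree B < degree A" and AC: "degree A \<le> degree C"
    and nc: "even (degree A + degree C) \<Longrightarrow> \<not> (\<exists>s. s \<noteq> 0 \<and> - (lead_coeff A * lead_coeff C) = s^2)"
    and y: "y \<noteq> 0"
  shows "A*x^2 + B*x*y + C*y^2 \<noteq> 0 \<and> degree C + 2*degree y \<le> degree (A*x^2 + B*x*y + C*y^2)"
proof (cases "x = 0")
  case True
  then show ?thesis using C y by (simp add: degree_mult_eq degree_power_eq)
next
  case False
  then show ?thesis using qf_deg_core[OF A C Bd AC nc False y] by simp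
qed

lemma two_poly: "(2::'a::field poly) = [:2:]" "(4::'a::field poly) = [:4:]"
  by (simp_all add: numeral_poly)

lemma test1: fixes p :: "'a::field poly" shows "2 * p = smult 2 p" "4 * p = smult 4 p"
  by (simp_all add: numeral_poly)

lemma part1:
  fixes A B C :: "'a::field poly" and M :: "'a mat2"
  assumes A: "A \<noteq> 0" and C: "C \<noteq> 0" and Bd: "B = 0 \<or> degree B < degree A" and AC: "degree A < degree C"
    and nc: "even (degree A + degree C) \<Longrightarrow> \<not> (\<exists>s. s \<noteq> 0 \<and> - (lead_coeff A * lead_coeff C) = s^2)"
    and two: "(2::'a) \<noteq> 0"
    and GL: "inGL2 M" and fc: "form_comp (A, B, C) M = (A, B, C)"
  shows "M = (1, 0, 0, 1) \<or> M = (-1, 0, 0, -1) \<or>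
        ((M = (1, 0, 0, -1) \<or> M = (-1, 0, 0, 1)) \<and> B = 0)"
proof -
  obtain a b c d where M: "M = (a, b, c, d)" by (cases M) auto
  have AC': "degree A \<le> degree C" using AC by simp
  have E1: "A*a^2 + B*a*c + C*c^2 = A" and E2: "2 * A * a * b + B * (a * d + b * c) + 2 * C * c * d = B"
    and E3: "A*b^2 + B*b*d + C*d^2 = C" using fc unfolding M form_comp_def by auto
  have c0: "c = 0"
  proof (rule ccontr)
    assume "c \<noteq> 0"
    from qf_deg_y[OF A C Bd AC' nc this, of a] E1 AC show False by simp
  qed
  have "A * (a^2 - 1) = 0" using E1 c0 by (simp add: algebra_simps)
  hence "a^2 = 1" using A by simp
  hence a1: "a = 1 \<or> a = -1" by (simp add: power2_eq_1_iff)
  have det: "a * d \<noteq> 0" "degree (a * d) = 0" using GL c0 unfolding inGL2_def mdet_def M by auto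
  have dd: "degree d = 0" using det(2) a1 by auto
  have b0: "b = 0"
  proof (rule ccontr)
    assume bn: "b \<noteq> 0"
    have eq: "smult 2 (A * a * b) = B * (1 - a * d)" using E2 c0
      by (simp add: algebra_simps numeral_poly)
    have an: "a \<noteq> 0" using a1 by auto
    have lhs: "smult 2 (A * a * b) \<noteq> 0" "degree (smult 2 (A * a * b)) \<ge> degree A"
      using two A an bn by (simp_all add: degree_mult_eq)
    show False
    proof (cases "B = 0")
      case True then show ?thesis using eq lhs by simp
    next
      case False
      have "degree (1 - a * d) \<le> 0" by (rule degree_diff_le) (use det in auto)
      hence "degree (B * (1 - a * d)) \<le> degree B" using degree_mult_le[of B "1 - a*d"] by simp
      then show ?thesis using eq lhs Bd False by simp
    qed
  qed
  have E2': "B * (a * d - 1) = 0" using E2 b0 c0 by (simp add: algebra_simps)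
  have "C * (d^2 - 1) = 0" using E3 b0 by (simp add: algebra_simps)
  hence "d^2 = 1" using C by simp
  hence d1: "d = 1 \<or> d = -1" by (simp add: power2_eq_1_iff)
  have t2: "(2::'a poly) \<noteq> 0" using two by (simp add: numeral_poly)
  show ?thesis
    using a1 d1 E2' t2 unfolding M b0 c0 by (auto simp: numeral_poly)
qed

lemma coeff_q:
  fixes A B C :: "'a::field poly"
  shows "coeff (A*[:a:]^2 + B*[:a:]*[:c:] + C*[:c:]^2) k = coeff A k * a^2 + coeff B k * (a*c) + coeff C k * c^2"
  by (simp add: power2_eq_square algebra_simps)

lemma coeff_q2:
  fixes A B C :: "'a::field poly"
  shows "coeff (2 * A * [:a:] * [:b:] + B * ([:a:] * [:d:] + [:b:] * [:c:]) + 2 * C * [:c:] * [:d:]) k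
     = 2 * (a*b) * coeff A k + (a*d + b*c) * coeff B k + 2 * (c*d) * coeff C k"
  by (simp add: algebra_simps numeral_poly)

lemma part2_consts:
  fixes A B C :: "'a::field poly"
  assumes A: "A \<noteq> 0" and C: "C \<noteq> 0" and Bd: "B = 0 \<or> degree B < degree A" and AC: "degree A = degree C"
    and nc: "even (degree A + degree C) \<Longrightarrow> \<not> (\<exists>s. s \<noteq> 0 \<and> - (lead_coeff A * lead_coeff C) = s^2)"
    and fc: "form_comp (A, B, C) (a, b, c, d) = (A, B, C)"
  shows "degree a = 0 \<and> degree b = 0 \<and> degree c = 0 \<and> degree d = 0"
proof -
  have AC': "degree A \<le> degree C" using AC by simp
  have E1: "A*a^2 + B*a*c + C*c^2 = A" and E3: "A*b^2 + B*b*d + C*d^2 = C"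
    using fc unfolding form_comp_def by auto
  have "degree a = 0" using qf_deg_x[OF A C Bd AC' nc, of a c] E1 by (cases "a = 0") auto
  moreover have "degree c = 0" using qf_deg_y[OF A C Bd AC' nc, of c a] E1 AC by (cases "c = 0") auto
  moreover have "degree b = 0" using qf_deg_x[OF A C Bd AC' nc, of b d] E3 AC by (cases "b = 0") auto
  moreover have "degree d = 0" using qf_deg_y[OF A C Bd AC' nc, of d b] E3 by (cases "d = 0") auto
  ultimately show ?thesis by simp
qed

lemma part2:
  fixes A B C :: "'a::field_gcd poly" and M :: "'a mat2"
  assumes A: "A \<noteq> 0" and C: "C \<noteq> 0" and Bd: "B = 0 \<or> degree B < degree A" and AC: "degree A = degree C"
    and nc: "even (degree A + degree C) \<Longrightarrow> \<not> (\<exists>s. s \<noteq> 0 \<and> - (lead_coeff A * lead_coeff C) = s^2)"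
    and two: "(2::'a) \<noteq> 0" and lA: "lead_coeff A = 1" and lam: "lam * lead_coeff C = 1"
    and prim: "gcd A (gcd B C) = 1" and dC: "degree C \<ge> 1"
    and GL: "inGL2 M" and fc: "form_comp (A, B, C) M = (A, B, C)"
  shows "\<exists>\<alpha> \<beta> u. (u = 1 \<or> u = -1) \<and> mdet M = [:u:] \<and>
           M = ([:\<alpha>:], [:\<beta>:], [:- u * lam * \<beta>:], [:u * \<alpha>:]) \<and>
           (\<beta> \<noteq> 0 \<longrightarrow> B \<noteq> 0 \<and> smult \<alpha> B = smult (u * \<beta>) (smult lam C - A))"
proof -
  obtain a b c d where M: "M = (a, b, c, d)" by (cases M) auto
  have dg: "degree a = 0 \<and> degree b = 0 \<and> degree c = 0 \<and> degree d = 0"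
    using part2_consts[OF A C Bd AC nc] fc M by simp
  define a0 where "a0 = coeff a 0"
  define b0 where "b0 = coeff b 0"
  define c0 where "c0 = coeff c 0"
  define d0 where "d0 = coeff d 0"
  have ca: "a = [:a0:]" "b = [:b0:]" "c = [:c0:]" "d = [:d0:]"
    unfolding a0_def b0_def c0_def d0_def using dg degree_0_id[of a] degree_0_id[of b]
      degree_0_id[of c] degree_0_id[of d] by simp_all
  have E1: "A*[:a0:]^2 + B*[:a0:]*[:c0:] + C*[:c0:]^2 = A"
    and E2: "2 * A * [:a0:] * [:b0:] + B * ([:a0:] * [:d0:] + [:b0:] * [:c0:]) + 2 * C * [:c0:] * [:d0:] = B"
    and E3: "A*[:b0:]^2 + B*[:b0:]*[:d0:] + C*[:d0:]^2 = C"
    using fc unfolding M ca form_comp_def by (simp_all add: ac_simps)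
  have E1k: "\<And>k. coeff A k * a0^2 + coeff B k * (a0*c0) + coeff C k * c0^2 = coeff A k"
    using E1 coeff_q by metis
  have E3k: "\<And>k. coeff A k * b0^2 + coeff B k * (b0*d0) + coeff C k * d0^2 = coeff C k"
    using E3 coeff_q by metis
  have E2k: "\<And>k. 2 * (a0*b0) * coeff A k + (a0*d0 + b0*c0) * coeff B k + 2 * (c0*d0) * coeff C k = coeff B k"
    using E2 coeff_q2 by metis
  define n where "n = degree A"
  define mu where "mu = lead_coeff C"
  have An: "coeff A n = 1" using lA n_def by simp
  have Cn: "coeff C n = mu" using AC n_def mu_def by simp
  have Bn: "coeff B n = 0" using Bd n_def by (auto simp: coeff_eq_0)
  have mu0: "mu \<noteq> 0" using C mu_def by simp
  have lam0: "lam \<noteq> 0" using lam by auto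
  have K1: "a0^2 + mu * c0^2 = 1" using E1k[of n] An Bn Cn by simp
  have K3: "b0^2 + mu * d0^2 = mu" using E3k[of n] An Bn Cn by simp
  have "2 * (a0*b0 + mu * c0 * d0) = 0" using E2k[of n] An Bn Cn by (simp add: algebra_simps)
  hence K2: "a0*b0 + mu * c0 * d0 = 0" using two by (metis mult_eq_0_iff)
  define u where "u = a0 * d0 - b0 * c0"
  have idt: "(a0^2 + mu * c0^2) * (b0^2 + mu * d0^2) - (a0*b0 + mu * c0 * d0)^2 = mu * u^2"
    unfolding u_def by (simp add: power2_eq_square algebra_simps)
  hence "mu * u^2 = mu * 1" using K1 K2 K3 by simp
  hence u2: "u^2 = 1" using mu0 by simp
  hence u1: "u = 1 \<or> u = -1" by (simp add: power2_eq_1_iff)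
  have lm: "lam * mu = 1" using lam mu_def by simp
  have dd: "d0 = u * a0" using K1 K2 u_def by algebra
  have cc: "c0 = - u * lam * b0" using K2 K3 u_def lm by algebra
  have det: "mdet M = [:u:]" unfolding M ca mdet_def u_def by simp
  have Mf: "M = ([:a0:], [:b0:], [:- u * lam * b0:], [:u * a0:])" unfolding M ca cc dd by simp
  have rel: "b0 \<noteq> 0 \<Longrightarrow> smult a0 B = smult (u * b0) (smult lam C - A)"
  proof -
    assume b0: "b0 \<noteq> 0"
    show ?thesis
    proof (rule poly_eqI)
      fix k
      have c2: "c0^2 = lam^2 * b0^2" using u2 unfolding cc by (simp add: power_mult_distrib)
      have "mu * c0^2 = lam * b0^2" unfolding c2 using lm by (simp add: power2_eq_square algebra_simps)
      hence a2: "a0^2 = 1 - lam * b0^2" using K1 by (simp add: algebra_simps)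
      have ac: "a0 * c0 = - u * lam * a0 * b0" unfolding cc by simp
      have "coeff A k * (1 - lam * b0^2) + coeff B k * (- u * lam * a0 * b0) + coeff C k * (lam^2 * b0^2) = coeff A k"
        using E1k[of k] unfolding a2 ac c2 .
      hence "lam * b0 * (lam * b0 * coeff C k - b0 * coeff A k - u * a0 * coeff B k) = 0"
        by (simp add: algebra_simps power2_eq_square)
      hence z: "lam * b0 * coeff C k - b0 * coeff A k - u * a0 * coeff B k = 0" using lam0 b0 by simp
      have "a0 * coeff B k = u^2 * (a0 * coeff B k)" using u2 by simp
      also have "... = u * (u * a0 * coeff B k)" by (simp add: power2_eq_square)
      also have "u * a0 * coeff B k = lam * b0 * coeff C k - b0 * coeff A k" using z by simp
      finally have "a0 * coeff B k = u * (b0 * (lam * coeff C k - coeff A k))" by (simp add: algebra_simps)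
      then show "coeff (smult a0 B) k = coeff (smult (u * b0) (smult lam C - A)) k"
        by (simp add: algebra_simps)
    qed
  qed
  have Bn0: "b0 \<noteq> 0 \<Longrightarrow> B \<noteq> 0"
  proof
    assume b0: "b0 \<noteq> 0" and B0: "B = 0"
    have "smult (u * b0) (smult lam C - A) = 0" using rel[OF b0] B0 by simp
    moreover have "u * b0 \<noteq> 0" using u1 b0 by auto
    ultimately have "A = smult lam C" by simp
    hence "C dvd A" by (simp add: dvd_smult)
    hence "C dvd gcd A (gcd B C)" using B0 by simp
    hence "is_unit C" using prim by simp
    thus False using C dC by (simp add: is_unit_iff_degree)
  qed
  show ?thesis using u1 det Mf rel Bn0 by blast
qed

lemma algtest:
  fixes u al be lam Ak Bk Ck :: "'a::field"
  assumes u2: "u^2 = 1" and r: "al * Bk = u*be*(lam*Ck - Ak)"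
   and e2: "2*(al*be)*Ak + (al*(u*al) + be*(-u*lam*be))*Bk + 2*((-u*lam*be)*(u*al))*Ck = Bk"
   and n: "al^2 + lam*be^2 = 1"
  shows "(u + 1) * Bk = 0"
  using assms by algebra

lemma comp_back:
  fixes A B C :: "'a::field poly"
  assumes r: "smult a0 B = smult (-b0) (smult lam C - A)" and n: "a0^2 + lam*b0^2 = 1"
  shows "inGL2 ([:a0:], [:b0:], [:lam*b0:], [:-a0:]) \<and> form_comp (A, B, C) ([:a0:], [:b0:], [:lam*b0:], [:-a0:]) = (A, B, C)"
proof -
  have rk: "\<And>k. a0 * coeff B k = - b0 * (lam * coeff C k - coeff A k)"
  proof -
    fix k show "a0 * coeff B k = - b0 * (lam * coeff C k - coeff A k)"
      using arg_cong[OF r, of "\<lambda>p. coeff p k"] by simp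
  qed
  have "mdet ([:a0:], [:b0:], [:lam*b0:], [:-a0:]) = [:-(a0^2 + lam*b0^2):]"
    unfolding mdet_def by (simp add: power2_eq_square algebra_simps)
  hence GL: "inGL2 ([:a0:], [:b0:], [:lam*b0:], [:-a0:])" unfolding inGL2_def using n by simp
  have c1: "A*[:a0:]^2 + B*[:a0:]*[:lam*b0:] + C*[:lam*b0:]^2 = A"
  proof (rule poly_eqI)
    fix k
    have "coeff A k * a0^2 + coeff B k * (a0*(lam*b0)) + coeff C k * (lam*b0)^2 = coeff A k"
      using rk[of k] n by algebra
    thus "coeff (A*[:a0:]^2 + B*[:a0:]*[:lam*b0:] + C*[:lam*b0:]^2) k = coeff A k" by (simp only: coeff_q)
  qed
  have c3: "A*[:b0:]^2 + B*[:b0:]*[:-a0:] + C*[:-a0:]^2 = C"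
  proof (rule poly_eqI)
    fix k
    have "coeff A k * b0^2 + coeff B k * (b0*(-a0)) + coeff C k * (-a0)^2 = coeff C k"
      using rk[of k] n by algebra
    thus "coeff (A*[:b0:]^2 + B*[:b0:]*[:-a0:] + C*[:-a0:]^2) k = coeff C k" by (simp only: coeff_q)
  qed
  have c2: "2 * A * [:a0:] * [:b0:] + B * ([:a0:] * [:-a0:] + [:b0:] * [:lam*b0:]) + 2 * C * [:lam*b0:] * [:-a0:] = B"
  proof (rule poly_eqI)
    fix k
    have "2 * (a0*b0) * coeff A k + (a0*(-a0) + b0*(lam*b0)) * coeff B k + 2 * ((lam*b0)*(-a0)) * coeff C k = coeff B k"
      using rk[of k] n by algebra
    thus "coeff (2 * A * [:a0:] * [:b0:] + B * ([:a0:] * [:-a0:] + [:b0:] * [:lam*b0:]) + 2 * C * [:lam*b0:] * [:-a0:]) k = coeff B k"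
      by (simp only: coeff_q2)
  qed
  have fc: "form_comp (A, B, C) ([:a0:], [:b0:], [:lam*b0:], [:-a0:]) =
     (A*[:a0:]^2 + B*[:a0:]*[:lam*b0:] + C*[:lam*b0:]^2,
      2 * A * [:a0:] * [:b0:] + B * ([:a0:] * [:-a0:] + [:b0:] * [:lam*b0:]) + 2 * C * [:lam*b0:] * [:-a0:],
      A*[:b0:]^2 + B*[:b0:]*[:-a0:] + C*[:-a0:]^2)"
    unfolding form_comp_def by (simp add: ac_simps)
  show ?thesis using GL unfolding fc c1 c2 c3 by simp
qed

lemma part3_char:
  fixes A B C :: "'a::field_gcd poly" and M :: "'a mat2"
  assumes A: "A \<noteq> 0" and C: "C \<noteq> 0" and Bd: "B = 0 \<or> degree B < degree A" and AC: "degree A = degree C"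
    and nc: "even (degree A + degree C) \<Longrightarrow> \<not> (\<exists>s. s \<noteq> 0 \<and> - (lead_coeff A * lead_coeff C) = s^2)"
    and two: "(2::'a) \<noteq> 0" and lA: "lead_coeff A = 1" and lam: "lam * lead_coeff C = 1"
    and prim: "gcd A (gcd B C) = 1" and dC: "degree C \<ge> 1"
  shows "(inGL2 M \<and> form_comp (A, B, C) M = (A, B, C) \<and> fst (snd M) \<noteq> 0) \<longleftrightarrow>
     (\<exists>a0 b0. b0 \<noteq> 0 \<and> M = ([:a0:], [:b0:], [:lam*b0:], [:-a0:]) \<and>
        smult a0 B = smult (-b0) (smult lam C - A) \<and> a0^2 + lam*b0^2 = 1)"
proof
  assume H: "inGL2 M \<and> form_comp (A, B, C) M = (A, B, C) \<and> fst (snd M) \<noteq> 0"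
  then obtain al be u where u1: "u = 1 \<or> u = -1" and det: "mdet M = [:u:]"
    and Mf: "M = ([:al:], [:be:], [:- u * lam * be:], [:u * al:])"
    and rel: "be \<noteq> 0 \<longrightarrow> B \<noteq> 0 \<and> smult al B = smult (u * be) (smult lam C - A)"
    using part2[OF A C Bd AC nc two lA lam prim dC, of M] by blast
  have be: "be \<noteq> 0" using H Mf by simp
  have B0: "B \<noteq> 0" and r: "smult al B = smult (u * be) (smult lam C - A)" using rel be by auto
  have u2: "u^2 = 1" using u1 by auto
  have "[:u * (al^2 + lam*be^2):] = [:u:]" using det unfolding Mf mdet_def
    by (simp add: power2_eq_square algebra_simps)
  hence n: "al^2 + lam*be^2 = 1" using u1 by auto
  define k where "k = degree B"
  have Bk: "coeff B k \<noteq> 0" using B0 k_def by simp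
  have rk: "al * coeff B k = u*be*(lam*coeff C k - coeff A k)"
    using arg_cong[OF r, of "\<lambda>p. coeff p k"] by (simp add: algebra_simps)
  have E2: "2 * A * [:al:] * [:be:] + B * ([:al:] * [:u * al:] + [:be:] * [:- u * lam * be:]) + 2 * C * [:- u * lam * be:] * [:u * al:] = B"
  proof -
    have "form_comp (A, B, C) M = (A*[:al:]^2 + B*[:al:]*[:- u * lam * be:] + C*[:- u * lam * be:]^2,
      2 * A * [:al:] * [:be:] + B * ([:al:] * [:u * al:] + [:be:] * [:- u * lam * be:]) + 2 * C * [:- u * lam * be:] * [:u * al:],
      A*[:be:]^2 + B*[:be:]*[:u * al:] + C*[:u * al:]^2)"
      unfolding Mf form_comp_def by (simp add: ac_simps)
    thus ?thesis using H by simp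
  qed
  have e2: "2*(al*be)*coeff A k + (al*(u*al) + be*(-u*lam*be))*coeff B k + 2*((-u*lam*be)*(u*al))*coeff C k = coeff B k"
    using arg_cong[OF E2, of "\<lambda>p. coeff p k"] by (simp only: coeff_q2)
  have "(u + 1) * coeff B k = 0" using u2 rk e2 n by algebra
  hence "u + 1 = 0" using Bk by simp
  hence um: "u = -1" by (simp add: add_eq_0_iff2)
  show "\<exists>a0 b0. b0 \<noteq> 0 \<and> M = ([:a0:], [:b0:], [:lam*b0:], [:-a0:]) \<and>
        smult a0 B = smult (-b0) (smult lam C - A) \<and> a0^2 + lam*b0^2 = 1"
    using be Mf r n um by auto
next
  assume "\<exists>a0 b0. b0 \<noteq> 0 \<and> M = ([:a0:], [:b0:], [:lam*b0:], [:-a0:]) \<and>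
        smult a0 B = smult (-b0) (smult lam C - A) \<and> a0^2 + lam*b0^2 = 1"
  then obtain a0 b0 where b0: "b0 \<noteq> 0" and Mf: "M = ([:a0:], [:b0:], [:lam*b0:], [:-a0:])"
    and r: "smult a0 B = smult (-b0) (smult lam C - A)" and n: "a0^2 + lam*b0^2 = 1" by blast
  show "inGL2 M \<and> form_comp (A, B, C) M = (A, B, C) \<and> fst (snd M) \<noteq> 0"
    using comp_back[OF r n] b0 Mf by simp
qed

lemma part3:
  fixes A B C :: "'a::field_gcd poly"
  assumes A: "A \<noteq> 0" and C: "C \<noteq> 0" and Bd: "B = 0 \<or> degree B < degree A" and AC: "degree A = degree C"
    and nc: "even (degree A + degree C) \<Longrightarrow> \<not> (\<exists>s. s \<noteq> 0 \<and> - (lead_coeff A * lead_coeff C) = s^2)"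
    and two: "(2::'a) \<noteq> 0" and lA: "lead_coeff A = 1" and lam: "lam * lead_coeff C = 1"
    and prim: "gcd A (gcd B C) = 1" and dC: "degree C \<ge> 1"
  shows "(let Aut = {M. inGL2 M \<and> form_comp (A, B, C) M = (A, B, C) \<and> fst (snd M) \<noteq> 0} in
         (Aut \<noteq> {} \<longleftrightarrow>
            B \<noteq> 0 \<and> (\<exists>c. smult lam C - A = smult c B \<and>
                           (\<exists>s. s \<noteq> 0 \<and> c^2 + lam = s^2)))
         \<and> (Aut \<noteq> {} \<longrightarrow> card Aut = 2))"
proof -
  define Aut where "Aut = {M. inGL2 M \<and> form_comp (A, B, C) M = (A, B, C) \<and> fst (snd M) \<noteq> 0}"
  have mem: "\<And>M. M \<in> Aut \<longleftrightarrow> (\<exists>a0 b0. b0 \<noteq> 0 \<and> M = ([:a0:], [:b0:], [:lam*b0:], [:-a0:]) \<and>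
        smult a0 B = smult (-b0) (smult lam C - A) \<and> a0^2 + lam*b0^2 = 1)"
    unfolding Aut_def using part3_char[OF A C Bd AC nc two lA lam prim dC] by blast
  have memB: "\<And>M. M \<in> Aut \<Longrightarrow> B \<noteq> 0"
  proof -
    fix M assume "M \<in> Aut"
    hence H: "inGL2 M" "form_comp (A, B, C) M = (A, B, C)" "fst (snd M) \<noteq> 0" unfolding Aut_def by auto
    then obtain al be u where Mf: "M = ([:al:], [:be:], [:- u * lam * be:], [:u * al:])"
      and rel: "be \<noteq> 0 \<longrightarrow> B \<noteq> 0 \<and> smult al B = smult (u * be) (smult lam C - A)"
      using part2[OF A C Bd AC nc two lA lam prim dC, of M] by blast
    show "B \<noteq> 0" using H(3) Mf rel by auto
  qed
  have fwd: "Aut \<noteq> {} \<Longrightarrow> B \<noteq> 0 \<and> (\<exists>c. smult lam C - A = smult c B \<and> (\<exists>s. s \<noteq> 0 \<and> c^2 + lam = s^2))"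
  proof -
    assume "Aut \<noteq> {}"
    then obtain M where M: "M \<in> Aut" by blast
    have B0: "B \<noteq> 0" using memB[OF M] .
    obtain a0 b0 where b0: "b0 \<noteq> 0" and r: "smult a0 B = smult (-b0) (smult lam C - A)"
      and n: "a0^2 + lam*b0^2 = 1" using M mem by blast
    have e: "smult lam C - A = smult (-a0/b0) B"
    proof (rule poly_eqI)
      fix k
      have "a0 * coeff B k = - b0 * (lam * coeff C k - coeff A k)"
        using arg_cong[OF r, of "\<lambda>p. coeff p k"] by simp
      thus "coeff (smult lam C - A) k = coeff (smult (-a0/b0) B) k" using b0
        by (simp add: field_simps)
    qed
    have "(-a0/b0)^2 + lam = (1/b0)^2" using n b0 by (simp add: field_simps power2_eq_square)
    thus ?thesis using B0 e b0 by (metis divide_eq_0_iff one_neq_zero)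
  qed
  have bwd: "B \<noteq> 0 \<and> (\<exists>c. smult lam C - A = smult c B \<and> (\<exists>s. s \<noteq> 0 \<and> c^2 + lam = s^2))
     \<Longrightarrow> Aut \<noteq> {}"
  proof -
    assume "B \<noteq> 0 \<and> (\<exists>c. smult lam C - A = smult c B \<and> (\<exists>s. s \<noteq> 0 \<and> c^2 + lam = s^2))"
    then obtain c s where e: "smult lam C - A = smult c B" and s: "s \<noteq> 0" and cs: "c^2 + lam = s^2" by blast
    have "([:-c/s:], [:1/s:], [:lam*(1/s):], [:-(-c/s):]) \<in> Aut"
      unfolding mem
    proof (intro exI conjI)
      show "1/s \<noteq> 0" using s by simp
      show "smult (-c/s) B = smult (-(1/s)) (smult lam C - A)" unfolding e by simp
      show "(-c/s)^2 + lam*(1/s)^2 = 1" using cs s by (simp add: field_simps power2_eq_square)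
    qed simp
    thus ?thesis by blast
  qed
  have crd: "Aut \<noteq> {} \<Longrightarrow> card Aut = 2"
  proof -
    assume ne: "Aut \<noteq> {}"
    then obtain c s where e: "smult lam C - A = smult c B" and s: "s \<noteq> 0" and cs: "c^2 + lam = s^2"
      and B0: "B \<noteq> 0" using fwd by blast
    define Mb where "Mb = (\<lambda>b. ([:-(c*b):], [:b:], [:lam*b:], [:-(-(c*b)):]))"
    have inA: "\<And>b. b = 1/s \<or> b = -1/s \<Longrightarrow> Mb b \<in> Aut"
    proof -
      fix b assume b: "b = 1/s \<or> b = -1/s"
      show "Mb b \<in> Aut" unfolding mem Mb_def
      proof (intro exI conjI)
        show "b \<noteq> 0" using b s by auto
        show "smult (-(c*b)) B = smult (-b) (smult lam C - A)" unfolding e by (simp add: mult.commute)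
        have "(b * s)^2 = 1" using b s by auto
        hence "b^2 * s^2 = 1" by (simp add: power_mult_distrib)
        thus "(-(c*b))^2 + lam*b^2 = 1" using cs by algebra
      qed simp
    qed
    have sub: "Aut \<subseteq> {Mb (1/s), Mb (-1/s)}"
    proof
      fix M assume M: "M \<in> Aut"
      then obtain a0 b0 where b0: "b0 \<noteq> 0" and Mf: "M = ([:a0:], [:b0:], [:lam*b0:], [:-a0:])"
        and r: "smult a0 B = smult (-b0) (smult lam C - A)" and n: "a0^2 + lam*b0^2 = 1" using mem by blast
      define k where "k = degree B"
      have Bk: "coeff B k \<noteq> 0" using B0 k_def by simp
      have "a0 * coeff B k = - b0 * (c * coeff B k)"
        using arg_cong[OF r, of "\<lambda>p. coeff p k"] unfolding e by simp
      hence "(a0 + b0 * c) * coeff B k = 0" by (simp add: algebra_simps)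
      hence a0: "a0 = - (c * b0)" using Bk by (simp add: add_eq_0_iff2 mult.commute)
      have "(b0 * s)^2 = 1" using n cs unfolding a0 by algebra
      hence "b0 * s = 1 \<or> b0 * s = -1" by (simp add: power2_eq_1_iff)
      hence "b0 = 1/s \<or> b0 = -1/s" using s by (auto simp: field_simps)
      moreover have "M = Mb b0" unfolding Mf Mb_def a0 by simp
      ultimately show "M \<in> {Mb (1/s), Mb (-1/s)}" by auto
    qed
    have "{Mb (1/s), Mb (-1/s)} \<subseteq> Aut" using inA by auto
    hence eqA: "Aut = {Mb (1/s), Mb (-1/s)}" using sub by blast
    have "1/s \<noteq> -1/s"
    proof
      assume "1/s = -1/s"
      hence "2 * (1/s) = 0" by (simp add: field_simps)
      thus False using two s by simp
    qed
    hence "Mb (1/s) \<noteq> Mb (-1/s)" unfolding Mb_def by simp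
    thus "card Aut = 2" unfolding eqA by simp
  qed
  show ?thesis unfolding Aut_def[symmetric] Let_def using fwd bwd crd by blast
qed

theorem mainTheorem7:
  fixes h :: "'a::{field_gcd,finite}"
    and A B C :: "'a poly"
  assumes q: "coprime (card (UNIV :: 'a set)) (6::nat)"
    and h: "primitive_root h"
    and st: "standing h (A, B, C)"
    and pr: "partially_reduced h (A, B, C)"
    and iu: "imaginary (disc (A, B, C)) \<or> unusual (disc (A, B, C))"
  shows
   "(\<forall>M. inGL2 M \<and> form_comp (A, B, C) M = (A, B, C) \<longrightarrow> pabs A < pabs C \<longrightarrow>
        M = (1, 0, 0, 1) \<or> M = (-1, 0, 0, -1) \<or>
        ((M = (1, 0, 0, -1) \<or> M = (-1, 0, 0, 1)) \<and> B = 0))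
  \<and> (\<forall>M. inGL2 M \<and> form_comp (A, B, C) M = (A, B, C) \<longrightarrow> pabs A = pabs C \<longrightarrow>
        (\<exists>\<alpha> \<beta> u. (u = 1 \<or> u = -1) \<and> mdet M = [:u:] \<and>
           M = ([:\<alpha>:], [:\<beta>:], [:- u * (-4 / h) * \<beta>:], [:u * \<alpha>:]) \<and>
           (\<beta> \<noteq> 0 \<longrightarrow> B \<noteq> 0 \<and> smult \<alpha> B = smult (u * \<beta>) (smult (-4 / h) C - A))))
  \<and> (pabs A = pabs C \<longrightarrow>
       (let Aut = {M. inGL2 M \<and> form_comp (A, B, C) M = (A, B, C) \<and> fst (snd M) \<noteq> 0} in
         (Aut \<noteq> {} \<longleftrightarrow>
            B \<noteq> 0 \<and> (\<exists>c. smult (-4 / h) C - A = smult c B \<and>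
                           (\<exists>s. s \<noteq> 0 \<and> c^2 + (-4 / h) = s^2)))
         \<and> (Aut \<noteq> {} \<longrightarrow> card Aut = 2)))"
proof -
  define q where "q = card (UNIV :: 'a set)"
  have two: "(2::'a) \<noteq> 0" using two_ne_fin[OF q] .
  have q1: "1 < q"
  proof -
    have "card {0::'a, 1} \<le> q" unfolding q_def by (rule card_mono) auto
    thus ?thesis by simp
  qed
  have pa: "\<And>X :: 'a poly. X \<noteq> 0 \<Longrightarrow> pabs X = q ^ degree X" unfolding pabs_def q_def by simp
  have pr': "pabs B < pabs A" "pabs A \<le> pabs C" "pabs A < pabs C \<longrightarrow> lead_coeff A \<in> {1, h}"
    "pabs A = pabs C \<longrightarrow> lead_coeff A = 1"
    using pr unfolding partially_reduced_def by auto
  have A0: "A \<noteq> 0" using pr'(1) unfolding pabs_def by (auto split: if_splits)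
  have C0: "C \<noteq> 0" using pr'(1,2) unfolding pabs_def by (auto split: if_splits)
  have Bd: "B = 0 \<or> degree B < degree A"
  proof (cases "B = 0")
    case False
    hence "q ^ degree B < q ^ degree A" using pr'(1) pa A0 by simp
    thus ?thesis using q1 by simp
  qed simp
  have AC: "degree A \<le> degree C" using pr'(2) pa A0 C0 q1 by simp
  define D where "D = disc (A, B, C)"
  define X where "X = smult (-4) (A * C)"
  have four: "(4::'a) \<noteq> 0" using two by (metis mult_eq_0_iff numeral_Bit0_eq_double)
  have DX: "D = B^2 + X" unfolding D_def X_def disc_def by (simp add: numeral_poly algebra_simps)
  have dX: "degree X = degree A + degree C" unfolding X_def using four A0 C0 by (simp add: degree_mult_eq)
  have lX: "lead_coeff X = -4 * (lead_coeff A * lead_coeff C)" unfolding X_def using four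
    by (simp add: lead_coeff_mult)
  have dD: "degree D = degree A + degree C \<and> lead_coeff D = -4 * (lead_coeff A * lead_coeff C)"
  proof (cases "B = 0")
    case True then show ?thesis using DX dX lX by simp
  next
    case False
    have "degree (B^2) < degree X" using False Bd AC dX by (simp add: degree_power_eq)
    then show ?thesis unfolding DX using dX lX degree_add_eq_right lead_coeff_add_le by metis
  qed
  have nc: "even (degree A + degree C) \<Longrightarrow> \<not> (\<exists>s. s \<noteq> 0 \<and> - (lead_coeff A * lead_coeff C) = s^2)"
  proof
    assume ev: "even (degree A + degree C)" and "\<exists>s. s \<noteq> 0 \<and> - (lead_coeff A * lead_coeff C) = s^2"
    then obtain s where s: "s \<noteq> 0" "- (lead_coeff A * lead_coeff C) = s^2" by blast
    have "lead_coeff D = (2*s)^2" using dD s(2) by (simp add: power_mult_distrib) (metis mult_minus_right)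
    moreover have "2 * s \<noteq> 0" using two s by simp
    ultimately have sq: "\<exists>s'. s' \<noteq> 0 \<and> lead_coeff D = s'^2" by blast
    have "\<not> imaginary D" using ev dD unfolding imaginary_def by simp
    hence "unusual D" using iu unfolding D_def by simp
    thus False using sq unfolding unusual_def by blast
  qed
  have stt: "gcd A (gcd B C) = 1" "degree D \<ge> 1" "lead_coeff D \<in> {1, h}"
    using st unfolding standing_def primitive_form_def D_def by auto
  have P1: "\<forall>M. inGL2 M \<and> form_comp (A, B, C) M = (A, B, C) \<longrightarrow> pabs A < pabs C \<longrightarrow>
        M = (1, 0, 0, 1) \<or> M = (-1, 0, 0, -1) \<or>
        ((M = (1, 0, 0, -1) \<or> M = (-1, 0, 0, 1)) \<and> B = 0)"
  proof (intro allI impI)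
    fix M assume H: "inGL2 M \<and> form_comp (A, B, C) M = (A, B, C)" and lt: "pabs A < pabs C"
    have "degree A < degree C" using lt pa A0 C0 q1 by simp
    thus "M = (1, 0, 0, 1) \<or> M = (-1, 0, 0, -1) \<or>
        ((M = (1, 0, 0, -1) \<or> M = (-1, 0, 0, 1)) \<and> B = 0)"
      using part1[OF A0 C0 Bd _ nc two] H by blast
  qed
  have eqcase: "pabs A = pabs C \<Longrightarrow> degree A = degree C \<and> lead_coeff A = 1 \<and> (-4/h) * lead_coeff C = 1 \<and> degree C \<ge> 1"
  proof -
    assume eq: "pabs A = pabs C"
    have dAC: "degree A = degree C" using eq pa A0 C0 q1 by simp
    have lA: "lead_coeff A = 1" using pr'(4) eq by simp
    have ev: "even (degree D)" using dD dAC by simp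
    hence "unusual D" using iu unfolding D_def imaginary_def by auto
    hence "lead_coeff D \<noteq> 1" unfolding unusual_def by (metis one_neq_zero power_one)
    hence hD: "lead_coeff D = h" using stt(3) by simp
    have "D \<noteq> 0" using stt(2) by auto
    hence h0: "h \<noteq> 0" using hD by auto
    have e: "lead_coeff D = -4 * (lead_coeff A * lead_coeff C)" using dD by blast
    have "-4 * lead_coeff C = h" using e hD lA by (metis mult_1)
    hence "(-4/h) * lead_coeff C = 1" using h0 by (simp add: field_simps)
    moreover have "degree C \<ge> 1" using stt(2) dD dAC by simp
    ultimately show ?thesis using dAC lA by simp
  qed
  have P2: "\<forall>M. inGL2 M \<and> form_comp (A, B, C) M = (A, B, C) \<longrightarrow> pabs A = pabs C \<longrightarrow>
        (\<exists>\<alpha> \<beta> u. (u = 1 \<or> u = -1) \<and> mdet M = [:u:] \<and>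
           M = ([:\<alpha>:], [:\<beta>:], [:- u * (-4 / h) * \<beta>:], [:u * \<alpha>:]) \<and>
           (\<beta> \<noteq> 0 \<longrightarrow> B \<noteq> 0 \<and> smult \<alpha> B = smult (u * \<beta>) (smult (-4 / h) C - A)))"
  proof (intro allI impI)
    fix M assume H: "inGL2 M \<and> form_comp (A, B, C) M = (A, B, C)" and eq: "pabs A = pabs C"
    note E = eqcase[OF eq]
    show "\<exists>\<alpha> \<beta> u. (u = 1 \<or> u = -1) \<and> mdet M = [:u:] \<and>
           M = ([:\<alpha>:], [:\<beta>:], [:- u * (-4 / h) * \<beta>:], [:u * \<alpha>:]) \<and>
           (\<beta> \<noteq> 0 \<longrightarrow> B \<noteq> 0 \<and> smult \<alpha> B = smult (u * \<beta>) (smult (-4 / h) C - A))"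
      using part2[OF A0 C0 Bd _ nc two _ _ stt(1), of "-4/h" M] E H by blast
  qed
  have P3: "pabs A = pabs C \<longrightarrow>
       (let Aut = {M. inGL2 M \<and> form_comp (A, B, C) M = (A, B, C) \<and> fst (snd M) \<noteq> 0} in
         (Aut \<noteq> {} \<longleftrightarrow>
            B \<noteq> 0 \<and> (\<exists>c. smult (-4 / h) C - A = smult c B \<and>
                           (\<exists>s. s \<noteq> 0 \<and> c^2 + (-4 / h) = s^2)))
         \<and> (Aut \<noteq> {} \<longrightarrow> card Aut = 2))"
  proof
    assume eq: "pabs A = pabs C"
    note E = eqcase[OF eq]
    show "let Aut = {M. inGL2 M \<and> form_comp (A, B, C) M = (A, B, C) \<and> fst (snd M) \<noteq> 0} in
         (Aut \<noteq> {} \<longleftrightarrow>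
            B \<noteq> 0 \<and> (\<exists>c. smult (-4 / h) C - A = smult c B \<and>
                           (\<exists>s. s \<noteq> 0 \<and> c^2 + (-4 / h) = s^2)))
         \<and> (Aut \<noteq> {} \<longrightarrow> card Aut = 2)"
      using part3[OF A0 C0 Bd _ nc two _ _ stt(1), of "-4/h"] E by blast
  qed
  show ?thesis using P1 P2 P3 by blast
qed

end
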